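(* (a) For every integer $n\ge 2$, $\mathrm{spt}2_d(n)=2p_d(n-1)-p_d(n)$. (b) For every integer $n\ge 4$, $\mathrm{spt}3_d(n)=2p_d(n-3)-2p_d(n-1)+p_d(n)$.
   Context: $\mathrm{spt}k_d(n)$ is the number of partitions of $n$ in which the smallest part occurs exactly $k$ times and all remaining parts (those larger than the smallest part) are pairwise distinct. $p_d(n)$ is the number of partitions of $n$ into distinct parts, with $p_d(0)=1$. *)

theory Defs
  imports Main "HOL-Library.Multiset"
begin

definition partitions :: "nat \<Rightarrow> nat multiset set" where
  "partitions n = {M. (\<forall>x \<in># M. 0 < x) \<and> sum_mset M = n}"

definition p_d :: "nat \<Rightarrow> nat" where
  "p_d n = card {M \<in> partitions n. \<forall>x. count M x \<le> 1}"

definition sptk_d :: "nat \<Rightarrow> nat \<Rightarrow> nat" where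
  "sptk_d k n = card {M \<in> partitions n. M \<noteq> {#} \<and>
      count M (Min (set_mset M)) = k \<and>
      (\<forall>x. x \<noteq> Min (set_mset M) \<longrightarrow> count M x \<le> 1)}"

end

theory Submission
  imports Defs
begin

definition Q :: "nat \<Rightarrow> nat \<Rightarrow> nat multiset set" where
  "Q m n = {M. (\<forall>x\<in>#M. m < x) \<and> (\<forall>x. count M x \<le> 1) \<and> sum_mset M = n}"

definition A :: "nat \<Rightarrow> nat \<Rightarrow> nat" where "A m n = card (Q m n)"

lemma distinct_mset_eq: "(\<forall>x. count M x \<le> 1) \<Longrightarrow> mset_set (set_mset M) = M"
  by (rule multiset_eqI) (metis count_mset_set(1,3) finite_set_mset le_neq_implies_less less_one
      not_in_iff)

lemma mem_le_sum: "x \<in># (M::nat multiset) \<Longrightarrow> x \<le> sum_mset M"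
  by (metis le_add1 sum_mset.remove)

lemma finite_Q: "finite (Q m n)"
proof (rule finite_subset)
  show "Q m n \<subseteq> mset_set ` Pow {..n}"
  proof
    fix M assume "M \<in> Q m n"
    hence "mset_set (set_mset M) = M" "set_mset M \<subseteq> {..n}"
      using distinct_mset_eq mem_le_sum unfolding Q_def by auto
    thus "M \<in> mset_set ` Pow {..n}" by (metis Pow_iff image_eqI)
  qed
qed auto

lemma p_d_A: "p_d n = A 0 n"
  unfolding p_d_def A_def Q_def partitions_def by (rule arg_cong[where f=card]) auto

lemma A_zero: "A m 0 = 1"
proof -
  have "Q m 0 = {{#}}" unfolding Q_def apply auto by (metis multiset_nonemptyE not_less_zero)
  thus ?thesis by (simp add: A_def)
qed

lemma A_small: "0 < n \<Longrightarrow> n \<le> m \<Longrightarrow> A m n = 0"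
proof -
  assume "0 < n" "n \<le> m"
  have "Q m n = {}"
  proof (rule ccontr)
    assume "Q m n \<noteq> {}"
    then obtain M where M: "M \<in> Q m n" by auto
    hence "M \<noteq> {#}" using \<open>0<n\<close> unfolding Q_def by auto
    then obtain x where "x \<in># M" by auto
    with M have "m < x" "x \<le> n" using mem_le_sum unfolding Q_def by auto
    with \<open>n \<le> m\<close> show False by simp
  qed
  thus ?thesis by (simp add: A_def)
qed
lemma Q_split: "Q j n = Q (Suc j) n \<union> (if Suc j \<le> n then add_mset (Suc j) ` Q (Suc j) (n - Suc j) else {})"
proof (intro equalityI subsetI)
  fix M assume M: "M \<in> Q j n"
  have M1: "\<forall>x\<in>#M. j < x" and M2: "\<forall>x. count M x \<le> 1" and M3: "sum_mset M = n"
    using M unfolding Q_def by auto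
  show "M \<in> Q (Suc j) n \<union> (if Suc j \<le> n then add_mset (Suc j) ` Q (Suc j) (n - Suc j) else {})"
  proof (cases "Suc j \<in># M")
    case False
    have "\<forall>x\<in>#M. Suc j < x"
    proof
      fix x assume "x \<in># M"
      with M1 False show "Suc j < x" by (cases "x = Suc j") auto
    qed
    hence "M \<in> Q (Suc j) n" using M2 M3 unfolding Q_def by blast
    thus ?thesis by simp
  next
    case True
    define M' where "M' = M - {#Suc j#}"
    have MM: "M = add_mset (Suc j) M'" using True unfolding M'_def by simp
    have c: "count M' (Suc j) = 0" using M2[rule_format, of "Suc j"] MM by simp
    have a1: "\<forall>x\<in>#M'. Suc j < x"
    proof
      fix x assume x: "x \<in># M'"
      have "x \<noteq> Suc j"
      proof
        assume "x = Suc j"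
        with x have "Suc j \<in># M'" by simp
        with c show False using not_in_iff by metis
      qed
      moreover have "j < x" using M1 x MM by simp
      ultimately show "Suc j < x" by simp
    qed
    have a2: "\<forall>x. count M' x \<le> 1"
    proof
      fix x show "count M' x \<le> 1" using M2[rule_format, of x] MM by (simp split: if_splits)
    qed
    have a3: "sum_mset M' = n - Suc j" "Suc j \<le> n" using M3 MM by auto
    have "M' \<in> Q (Suc j) (n - Suc j)" unfolding Q_def using a1 a2 a3 by blast
    thus ?thesis using MM a3 by auto
  qed
next
  fix M assume M: "M \<in> Q (Suc j) n \<union> (if Suc j \<le> n then add_mset (Suc j) ` Q (Suc j) (n - Suc j) else {})"
  show "M \<in> Q j n"
  proof (cases "M \<in> Q (Suc j) n")
    case True thus ?thesis unfolding Q_def by auto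
  next
    case False
    then obtain M' where MM: "M = add_mset (Suc j) M'" and M': "M' \<in> Q (Suc j) (n - Suc j)" and le: "Suc j \<le> n"
      using M by (auto split: if_splits)
    have b1: "\<forall>x\<in>#M'. Suc j < x" and b2: "\<forall>x. count M' x \<le> 1" and b3: "sum_mset M' = n - Suc j"
      using M' unfolding Q_def by auto
    have c: "count M' (Suc j) = 0" using b1 not_in_iff by (metis less_irrefl)
    have "\<forall>x\<in>#M. j < x" using b1 MM by auto
    moreover have "\<forall>x. count M x \<le> 1" using b2 c MM by simp
    moreover have "sum_mset M = n" using b3 le MM by simp
    ultimately show ?thesis unfolding Q_def by blast
  qed
qed

lemma A_rec: "A j n = A (Suc j) n + (if Suc j \<le> n then A (Suc j) (n - Suc j) else 0)"
proof -
  have nq: "add_mset (Suc j) M \<notin> Q (Suc j) n" for M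
    unfolding Q_def by simp
  have disj: "Q (Suc j) n \<inter> add_mset (Suc j) ` Q (Suc j) (n - Suc j) = {}"
    using nq by blast
  have inj: "inj_on (add_mset (Suc j)) X" for X by (auto simp: inj_on_def)
  show ?thesis
  proof (cases "Suc j \<le> n")
    case True
    have "A j n = card (Q (Suc j) n \<union> add_mset (Suc j) ` Q (Suc j) (n - Suc j))"
      unfolding A_def using Q_split[of j n] True by simp
    also have "\<dots> = A (Suc j) n + A (Suc j) (n - Suc j)"
      unfolding A_def using card_Un_disjoint[OF finite_Q _ disj] finite_Q card_image[OF inj]
      by (metis finite_imageI)
    finally show ?thesis using True by simp
  next
    case False thus ?thesis unfolding A_def using Q_split[of j n] by simp
  qed
qed

definition G :: "nat \<Rightarrow> nat \<Rightarrow> nat" where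
  "G k n = (\<Sum>j<n. if k * Suc j \<le> n then A (Suc j) (n - k * Suc j) else 0)"

lemma Min_rep:
  assumes "M' \<in> Q m N" "k \<ge> 1"
  shows "Min (set_mset (M' + replicate_mset k m)) = m"
proof (rule Min_eqI)
  show "finite (set_mset (M' + replicate_mset k m))" by simp
  show "m \<in> set_mset (M' + replicate_mset k m)" using assms(2) by simp
  fix y assume "y \<in> set_mset (M' + replicate_mset k m)"
  then show "m \<le> y" using assms(1) unfolding Q_def by (auto split: if_splits)
qed

definition S :: "nat \<Rightarrow> nat \<Rightarrow> nat multiset set" where
  "S k n = {M \<in> partitions n. M \<noteq> {#} \<and>
      count M (Min (set_mset M)) = k \<and>
      (\<forall>x. x \<noteq> Min (set_mset M) \<longrightarrow> count M x \<le> 1)}"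

lemma S_decomp:
  assumes k: "k \<ge> 1"
  shows "S k n = (\<Union>j\<in>{j\<in>{..<n}. k * Suc j \<le> n}.
           (\<lambda>M. M + replicate_mset k (Suc j)) ` Q (Suc j) (n - k * Suc j))"
proof (intro equalityI subsetI)
  fix M assume M: "M \<in> S k n"
  have ne: "M \<noteq> {#}" and pos: "\<forall>x\<in>#M. 0 < x" and sm: "sum_mset M = n"
    and cm: "count M (Min (set_mset M)) = k"
    and oth: "\<forall>x. x \<noteq> Min (set_mset M) \<longrightarrow> count M x \<le> 1"
    using M unfolding S_def partitions_def by auto
  define m where "m = Min (set_mset M)"
  have mM: "m \<in># M" using ne unfolding m_def by simp
  have mle: "\<And>x. x \<in># M \<Longrightarrow> m \<le> x" unfolding m_def by simp
  have m1: "m \<ge> 1" using pos mM by auto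
  define M' where "M' = M - replicate_mset k m"
  have cM': "count M' x = (if x = m then 0 else count M x)" for x
    unfolding M'_def using cm m_def by simp
  have MM: "M = M' + replicate_mset k m"
    by (rule multiset_eqI) (simp add: cM' cm[folded m_def])
  have q1: "\<forall>x\<in>#M'. m < x"
  proof
    fix x assume x: "x \<in># M'"
    hence "count M' x \<noteq> 0" by (simp add: not_in_iff[symmetric])
    hence "x \<noteq> m" "x \<in># M" using cM'[of x] by (auto simp: not_in_iff split: if_splits)
    with mle show "m < x" by force
  qed
  have q2: "\<forall>x. count M' x \<le> 1" using oth cM' unfolding m_def by simp
  have sm2: "sum_mset M' + k * m = n" using sm MM by simp
  have q3: "sum_mset M' = n - k * m" using sm2 by simp
  have kle: "k * m \<le> n" using sm2 by simp
  have "m \<le> k * m" using k by simp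
  hence mn: "m \<le> n" using kle by linarith
  define j where "j = m - 1"
  have mj: "m = Suc j" using m1 unfolding j_def by simp
  have "M' \<in> Q (Suc j) (n - k * Suc j)" unfolding Q_def using q1 q2 q3 mj by simp
  moreover have "j \<in> {j\<in>{..<n}. k * Suc j \<le> n}" using mn kle mj by simp
  ultimately show "M \<in> (\<Union>j\<in>{j\<in>{..<n}. k * Suc j \<le> n}.
           (\<lambda>M. M + replicate_mset k (Suc j)) ` Q (Suc j) (n - k * Suc j))"
    using MM mj by blast
next
  fix M assume "M \<in> (\<Union>j\<in>{j\<in>{..<n}. k * Suc j \<le> n}.
           (\<lambda>M. M + replicate_mset k (Suc j)) ` Q (Suc j) (n - k * Suc j))"
  then obtain j M' where j: "k * Suc j \<le> n" and M': "M' \<in> Q (Suc j) (n - k * Suc j)"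
    and MM: "M = M' + replicate_mset k (Suc j)" by blast
  have mn: "Min (set_mset M) = Suc j" using Min_rep[OF M' k] MM by simp
  have q1: "\<forall>x\<in>#M'. Suc j < x" and q2: "\<forall>x. count M' x \<le> 1"
    and q3: "sum_mset M' = n - k * Suc j" using M' unfolding Q_def by auto
  have c0: "count M' (Suc j) = 0" using q1 not_in_iff by (metis less_irrefl)
  have "\<forall>x\<in>#M. 0 < x" using q1 k MM by (auto split: if_splits)
  moreover have "sum_mset M = n" using q3 j MM by simp
  moreover have "M \<noteq> {#}" using k MM by simp
  moreover have "count M (Min (set_mset M)) = k" using mn c0 MM by simp
  moreover have "\<forall>x. x \<noteq> Min (set_mset M) \<longrightarrow> count M x \<le> 1" using mn q2 MM by simp
  ultimately show "M \<in> S k n" unfolding S_def partitions_def by blast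
qed

lemma spt_G: "k \<ge> 1 \<Longrightarrow> sptk_d k n = G k n"
proof -
  assume k: "k \<ge> 1"
  let ?I = "{j\<in>{..<n}. k * Suc j \<le> n}"
  let ?F = "\<lambda>j. (\<lambda>M. M + replicate_mset k (Suc j)) ` Q (Suc j) (n - k * Suc j)"
  have inj: "inj_on (\<lambda>M. M + replicate_mset k (Suc j)) X" for j X
    by (auto simp: inj_on_def)
  have "sptk_d k n = card (\<Union>j\<in>?I. ?F j)"
    unfolding sptk_d_def S_decomp[OF k, symmetric] S_def by simp
  also have "\<dots> = (\<Sum>j\<in>?I. card (?F j))"
  proof (rule card_UN_disjoint)
    show "finite ?I" by simp
    show "\<forall>j\<in>?I. finite (?F j)" using finite_Q by simp
    show "\<forall>i\<in>?I. \<forall>j\<in>?I. i \<noteq> j \<longrightarrow> ?F i \<inter> ?F j = {}"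
    proof (intro ballI impI)
      fix i j :: nat assume "i \<noteq> j"
      show "?F i \<inter> ?F j = {}"
      proof (rule ccontr)
        assume "?F i \<inter> ?F j \<noteq> {}"
        then obtain X where "X \<in> ?F i" "X \<in> ?F j" by blast
        then obtain Mi Mj where a: "Mi \<in> Q (Suc i) (n - k * Suc i)" and b: "X = Mi + replicate_mset k (Suc i)"
          and c: "Mj \<in> Q (Suc j) (n - k * Suc j)" and d: "X = Mj + replicate_mset k (Suc j)" by blast
        have e: "Min (set_mset X) = Suc i" using Min_rep[OF a k] b by simp
        moreover have "Min (set_mset X) = Suc j" using Min_rep[OF c k] d by simp
        with e \<open>i \<noteq> j\<close> show False by simp
      qed
    qed
  qed
  also have "\<dots> = (\<Sum>j\<in>?I. A (Suc j) (n - k * Suc j))"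
    by (rule sum.cong) (auto simp: card_image[OF inj] A_def)
  also have "\<dots> = G k n" unfolding G_def by (rule sum.inter_filter) simp
  finally show ?thesis .
qed

lemma G_ext:
  assumes k: "k \<ge> 1" and nM: "n \<le> M"
  shows "G k n = (\<Sum>j<M. if k * Suc j \<le> n then A (Suc j) (n - k * Suc j) else 0)"
  using nM
proof (induction M rule: dec_induct)
  case base thus ?case by (simp add: G_def)
next
  case (step M)
  have "\<not> k * Suc M \<le> n"
  proof
    assume "k * Suc M \<le> n"
    moreover have "Suc M \<le> k * Suc M" using k mult_le_mono1[of 1 k "Suc M"] by simp
    ultimately show False using step(1) by linarith
  qed
  thus ?case using step(3) by simp
qed

lemma tele: "i \<le> N \<Longrightarrow> A 0 N = A i N + (\<Sum>j<i. A (Suc j) (N - Suc j))"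
proof (induction i)
  case 0 thus ?case by simp
next
  case (Suc i)
  have "A i N = A (Suc i) N + A (Suc i) (N - Suc i)" using A_rec[of i N] Suc(2) by simp
  thus ?case using Suc by simp
qed

lemma ANN: "A N N = (if N = 0 then 1 else 0)"
  using A_zero A_small by simp

lemma pd_G1: "p_d N = (if N = 0 then 1 else 0) + G 1 N"
proof -
  have "p_d N = A N N + (\<Sum>j<N. A (Suc j) (N - Suc j))" using tele[of N N] p_d_A by simp
  moreover have "G 1 N = (\<Sum>j<N. A (Suc j) (N - Suc j))" unfolding G_def by simp
  ultimately show ?thesis using ANN by simp
qed

lemma partA:
  assumes n: "n \<ge> 2"
  shows "int (G 2 n) = 2 * int (p_d (n - 1)) - int (p_d n)"
proof -
  have pw: "int (if 2 * Suc j \<le> n then A (Suc j) (n - 2 * Suc j) else 0)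
      = int (A j (n - Suc j)) - int (A (Suc j) (n - Suc j))" if "j < n" for j
  proof (cases "2 * Suc j \<le> n")
    case True
    have "Suc j \<le> n - Suc j" "n - Suc j - Suc j = n - 2 * Suc j" using True by auto
    thus ?thesis using True A_rec[of j "n - Suc j"] by simp
  next
    case False
    show ?thesis
    proof (cases "n - Suc j = 0")
      case True thus ?thesis using False A_zero by simp
    next
      case ne: False
      have "A j (n - Suc j) = 0" "A (Suc j) (n - Suc j) = 0" using A_small ne False by auto
      thus ?thesis using False by simp
    qed
  qed
  obtain N where N: "n = Suc N" "N \<ge> 1" using n by (cases n) auto
  have "int (G 2 n) = (\<Sum>j<n. int (if 2 * Suc j \<le> n then A (Suc j) (n - 2 * Suc j) else 0))"
    unfolding G_def by simp
  also have "\<dots> = (\<Sum>j<n. int (A j (n - Suc j))) - (\<Sum>j<n. int (A (Suc j) (n - Suc j)))"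
    using pw by (simp add: sum_subtractf)
  also have "(\<Sum>j<n. int (A (Suc j) (n - Suc j))) = int (p_d n)"
  proof -
    have "G 1 n = (\<Sum>j<n. A (Suc j) (n - Suc j))" unfolding G_def by simp
    thus ?thesis using pd_G1[of n] n by simp
  qed
  also have "(\<Sum>j<n. int (A j (n - Suc j))) = 2 * int (p_d (n - 1))"
  proof -
    have "(\<Sum>j<n. int (A j (n - Suc j))) = int (A 0 N) + (\<Sum>j<N. int (A (Suc j) (N - Suc j)))"
      unfolding N(1) by (simp add: sum.lessThan_Suc_shift del: sum.lessThan_Suc)
    moreover have "G 1 N = (\<Sum>j<N. A (Suc j) (N - Suc j))" unfolding G_def by simp
    ultimately show ?thesis using pd_G1[of N] N p_d_A[of N] by simp
  qed
  finally show ?thesis .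
qed

lemma partB:
  assumes n: "n \<ge> 4"
  shows "int (G 3 n) = 2 * int (p_d (n - 3)) - 2 * int (p_d (n - 1)) + int (p_d n)"
proof -
  have pw: "int (if 3 * Suc j \<le> n then A (Suc j) (n - 3 * Suc j) else 0)
      = int (if 2 * Suc j \<le> n then A j (n - 2 * Suc j) else 0)
        - int (if 2 * Suc j \<le> n then A (Suc j) (n - 2 * Suc j) else 0)" for j
  proof (cases "2 * Suc j \<le> n")
    case True
    have "n - 2 * Suc j - Suc j = n - 3 * Suc j" by simp
    moreover have "(Suc j \<le> n - 2 * Suc j) = (3 * Suc j \<le> n)" by auto
    ultimately show ?thesis using True A_rec[of j "n - 2 * Suc j"] by simp
  next
    case False thus ?thesis by simp
  qed
  obtain n' where n': "n = Suc n'" using n by (cases n) auto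
  have "int (G 3 n) = (\<Sum>j<n. int (if 3 * Suc j \<le> n then A (Suc j) (n - 3 * Suc j) else 0))"
    unfolding G_def by simp
  also have "\<dots> = (\<Sum>j<n. int (if 2 * Suc j \<le> n then A j (n - 2 * Suc j) else 0))
        - (\<Sum>j<n. int (if 2 * Suc j \<le> n then A (Suc j) (n - 2 * Suc j) else 0))"
    unfolding pw by (simp add: sum_subtractf)
  also have "(\<Sum>j<n. int (if 2 * Suc j \<le> n then A (Suc j) (n - 2 * Suc j) else 0)) = int (G 2 n)"
    unfolding G_def by simp
  also have "(\<Sum>j<n. int (if 2 * Suc j \<le> n then A j (n - 2 * Suc j) else 0))
      = int (p_d (n - 2)) + int (G 2 (n - 2))"
  proof -
    have "(\<Sum>j<n. int (if 2 * Suc j \<le> n then A j (n - 2 * Suc j) else 0))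
        = int (A 0 (n - 2)) + (\<Sum>j<n'. int (if 2 * Suc (Suc j) \<le> n then A (Suc j) (n - 2 * Suc (Suc j)) else 0))"
      unfolding n' using n n' by (simp add: sum.lessThan_Suc_shift del: sum.lessThan_Suc)
    also have "(\<Sum>j<n'. int (if 2 * Suc (Suc j) \<le> n then A (Suc j) (n - 2 * Suc (Suc j)) else 0))
        = (\<Sum>j<n'. int (if 2 * Suc j \<le> n - 2 then A (Suc j) (n - 2 - 2 * Suc j) else 0))"
      by (rule sum.cong) (auto simp: algebra_simps)
    also have "\<dots> = int (G 2 (n - 2))"
      using G_ext[of 2 "n - 2" n'] n' by simp
    finally show ?thesis using p_d_A by simp
  qed
  finally have "int (G 3 n) = int (p_d (n - 2)) + int (G 2 (n - 2)) - int (G 2 n)" .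
  moreover have "int (G 2 (n - 2)) = 2 * int (p_d (n - 3)) - int (p_d (n - 2))"
    using partA[of "n - 2"] n by (simp add: numeral_eq_Suc)
  moreover have "int (G 2 n) = 2 * int (p_d (n - 1)) - int (p_d n)" using partA n by simp
  ultimately show ?thesis by simp
qed

theorem corollary5:
  shows "(\<forall>n::nat. n \<ge> 2 \<longrightarrow>
            int (sptk_d 2 n) = 2 * int (p_d (n - 1)) - int (p_d n))
       \<and> (\<forall>n::nat. n \<ge> 4 \<longrightarrow>
            int (sptk_d 3 n) = 2 * int (p_d (n - 3)) - 2 * int (p_d (n - 1)) + int (p_d n))"
  using partA partB spt_G by simp

end
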